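(* Let $\mathcal{F}_2(\rho,\sigma)=\operatorname{tr}(\rho\sigma)/\max[\operatorname{tr}(\rho^2),\operatorname{tr}(\sigma^2)]$ for density matrices $\rho,\sigma$ on the same finite-dimensional Hilbert space. Then: (i) for all density matrices $\rho_1,\sigma_1$ on $\mathcal{H}_1$ and $\rho_2,\sigma_2$ on $\mathcal{H}_2$, $\mathcal{F}_2(\rho_1\otimes\rho_2,\sigma_1\otimes\sigma_2)\ge\mathcal{F}_2(\rho_1,\sigma_1)\,\mathcal{F}_2(\rho_2,\sigma_2)$; (ii) for all density matrices $\rho,\sigma$ on $\mathcal{H}_1$ and $\tau$ on $\mathcal{H}_2$, $\mathcal{F}_2(\rho\otimes\tau,\sigma\otimes\tau)=\mathcal{F}_2(\rho,\sigma)$; (iii) for all density matrices $\rho,\sigma$ and all integers $n\ge 1$, $\mathcal{F}_2(\rho^{\otimes n},\sigma^{\otimes n})=[\mathcal{F}_2(\rho,\sigma)]^n$.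
   Context: A density matrix is a positive semidefinite operator of unit trace on a finite-dimensional complex Hilbert space. *)

theory Defs
  imports "Jordan_Normal_Form.Matrix"
begin

definition mtrace :: "complex mat \<Rightarrow> complex" where
  "mtrace A = (\<Sum>i<dim_row A. A $$ (i, i))"

text \<open>Positive semidefinite: Hermitian inner product of v with A v is real and nonnegative
  for every vector v (over the complex numbers this also forces A to be Hermitian).\<close>
definition psd :: "nat \<Rightarrow> complex mat \<Rightarrow> bool" where
  "psd n A \<longleftrightarrow> A \<in> carrier_mat n n \<and>
     (\<forall>v \<in> carrier_vec n. Im ((A *\<^sub>v v) \<bullet>c v) = 0 \<and> Re ((A *\<^sub>v v) \<bullet>c v) \<ge> 0)"

definition density_matrix :: "nat \<Rightarrow> complex mat \<Rightarrow> bool" where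
  "density_matrix n \<rho> \<longleftrightarrow> psd n \<rho> \<and> mtrace \<rho> = 1"

definition kron :: "complex mat \<Rightarrow> complex mat \<Rightarrow> complex mat" where
  "kron A B = mat (dim_row A * dim_row B) (dim_col A * dim_col B)
     (\<lambda>(i, j). A $$ (i div dim_row B, j div dim_col B) * B $$ (i mod dim_row B, j mod dim_col B))"

fun tpow :: "complex mat \<Rightarrow> nat \<Rightarrow> complex mat" where
  "tpow A 0 = 1\<^sub>m 1"
| "tpow A (Suc n) = kron A (tpow A n)"

text \<open>F_2(rho,sigma) = tr(rho sigma) / max(tr(rho^2), tr(sigma^2)); the traces are real
  for density matrices, so we take real parts.\<close>
definition F2 :: "complex mat \<Rightarrow> complex mat \<Rightarrow> real" where
  "F2 \<rho> \<sigma> = Re (mtrace (\<rho> * \<sigma>)) / max (Re (mtrace (\<rho> * \<rho>))) (Re (mtrace (\<sigma> * \<sigma>)))"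

end

theory Submission
  imports Defs
begin


definition Qf :: "nat \<Rightarrow> (nat \<Rightarrow> nat \<Rightarrow> complex) \<Rightarrow> (nat \<Rightarrow> complex) \<Rightarrow> complex" where
  "Qf n A v = (\<Sum>i<n. \<Sum>j<n. A i j * v j * cnj (v i))"

definition psdf :: "nat \<Rightarrow> (nat \<Rightarrow> nat \<Rightarrow> complex) \<Rightarrow> bool" where
  "psdf n A \<longleftrightarrow> (\<forall>v. Im (Qf n A v) = 0 \<and> 0 \<le> Re (Qf n A v))"

lemma Q1: assumes "i < n"
  shows "Qf n A (\<lambda>k. if k = i then x else 0) = A i i * x * cnj x"
  using assms unfolding Qf_def
  by (simp add: algebra_simps sum.distrib if_distrib[of cnj] if_distrib[of "\<lambda>z. _ * z"] cong: if_cong)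

lemma Q2: assumes "i < n" "j < n" "i \<noteq> j"
  shows "Qf n A (\<lambda>k. if k = i then x else if k = j then y else 0) =
    A i i * x * cnj x + A i j * y * cnj x + A j i * x * cnj y + A j j * y * cnj y"
proof -
  have v: "(\<lambda>k. if k = i then x else if k = j then y else 0) =
     (\<lambda>k. (if k = i then x else 0) + (if k = j then y else 0))" using assms by auto
  show ?thesis unfolding v Qf_def
    using assms by (simp add: algebra_simps sum.distrib if_distrib[of cnj] if_distrib[of "\<lambda>z. _ * z"] cong: if_cong)
qed

lemma psdf_diag: assumes "psdf n A" "i < n" shows "Im (A i i) = 0" "0 \<le> Re (A i i)"
  using assms Q1[OF assms(2), of A 1] unfolding psdf_def by (metis complex_cnj_one mult.right_neutral)+

lemma psdf_herm: assumes P: "psdf n A" and i: "i < n" and j: "j < n"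
  shows "A j i = cnj (A i j)"
proof (cases "i = j")
  case True then show ?thesis using psdf_diag[OF P i] by (simp add: complex_eq_iff)
next
  case False
  have d1: "Im (A i i) = 0" "Im (A j j) = 0" using psdf_diag[OF P] i j by auto
  have "Im (Qf n A (\<lambda>k. if k = i then 1 else if k = j then 1 else 0)) = 0" using P unfolding psdf_def by blast
  then have e1: "Im (A i j) + Im (A j i) = 0" unfolding Q2[OF i j False] using d1 by simp
  have "Im (Qf n A (\<lambda>k. if k = i then 1 else if k = j then \<i> else 0)) = 0" using P unfolding psdf_def by blast
  then have e2: "Re (A i j) - Re (A j i) = 0" unfolding Q2[OF i j False] using d1 by simp
  show ?thesis using e1 e2 by (simp add: complex_eq_iff)
qed

lemma psdf_zero_row: assumes P: "psdf n A" and m: "m < n" and a: "A m m = 0" and j: "j < n"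
  shows "A m j = 0"
proof (rule ccontr)
  assume b0: "A m j \<noteq> 0"
  define b where "b = A m j"
  then have jm: "m \<noteq> j" using a b0 by auto
  define r where "r = cmod b ^ 2"
  have r: "r > 0" using b0 unfolding r_def b_def by simp
  define t where "t = (Re (A j j) + 1) / (2 * r)"
  define x where "x = - (of_real t * b)"
  have bb: "b * cnj b = of_real r" unfolding r_def by (rule complex_norm_square[symmetric])
  have h: "A j m = cnj b" using psdf_herm[OF P m j] b_def by simp
  have "Qf n A (\<lambda>k. if k = m then x else if k = j then 1 else 0) =
     A j j - 2 * of_real t * of_real r"
    unfolding Q2[OF m j jm] a h unfolding x_def b_def[symmetric]
    using bb by (simp add: algebra_simps)
  moreover have "0 \<le> Re (Qf n A (\<lambda>k. if k = m then x else if k = j then 1 else 0))"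
    using P unfolding psdf_def by blast
  ultimately have "0 \<le> Re (A j j) - 2 * t * r" by simp
  moreover have "2 * t * r = Re (A j j) + 1" unfolding t_def using r by simp
  ultimately show False by simp
qed

lemma Q_shift: assumes m: "m < n"
  shows "Qf n A (\<lambda>k. v k + (if k = m then z else 0)) = Qf n A v + z * (\<Sum>i<n. A i m * cnj (v i))
     + cnj z * (\<Sum>j<n. A m j * v j) + A m m * z * cnj z"
  using m unfolding Qf_def
  apply (simp add: algebra_simps sum.distrib sum_distrib_left if_distrib[of cnj] if_distrib[of "\<lambda>z. _ * z"] cong: if_cong)
  apply (subst sum.swap)
  apply simp
  done

definition nn :: "complex \<Rightarrow> bool" where "nn z \<longleftrightarrow> Im z = 0 \<and> 0 \<le> Re z"

definition trf :: "nat \<Rightarrow> (nat \<Rightarrow> nat \<Rightarrow> complex) \<Rightarrow> (nat \<Rightarrow> nat \<Rightarrow> complex) \<Rightarrow> complex" where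
  "trf n A B = (\<Sum>i<n. \<Sum>j<n. A i j * B j i)"

lemma schur_psd: assumes P: "psdf n A" and m: "m < n" and a: "A m m \<noteq> 0"
  shows "psdf n (\<lambda>i j. A i j - A i m * A m j / A m m)"
  unfolding psdf_def
proof
  fix v
  define a where "a = A m m"
  have ar: "cnj a = a" using psdf_diag[OF P m] unfolding a_def by (simp add: complex_eq_iff)
  define c where "c = (\<Sum>j<n. A m j * v j)"
  have cc: "(\<Sum>i<n. A i m * cnj (v i)) = cnj c"
    unfolding c_def cnj_sum complex_cnj_mult
    by (rule sum.cong[OF refl]) (simp add: psdf_herm[OF P m])
  have "Qf n (\<lambda>i j. A i j - A i m * A m j / A m m) v = Qf n A v - (\<Sum>i<n. A i m * cnj (v i)) * c / a"
    unfolding Qf_def c_def a_def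
    by (simp add: algebra_simps sum_subtractf sum_distrib_left sum_distrib_right sum_divide_distrib)
  also have "\<dots> = Qf n A v + (- c / a) * (\<Sum>i<n. A i m * cnj (v i))
     + cnj (- c / a) * (\<Sum>j<n. A m j * v j) + A m m * (- c / a) * cnj (- c / a)"
  proof -
    have a0: "a \<noteq> 0" using a unfolding a_def .
    have e: "cnj (- c / a) = - cnj c / a" using ar by simp
    have "a * (- c / a) * (- cnj c / a) = c * cnj c / a" using a0 by (simp add: field_simps)
    then show ?thesis unfolding cc c_def[symmetric] a_def[symmetric] e
      by (simp add: diff_divide_distrib add_divide_distrib mult.commute)
  qed
  also have "\<dots> = Qf n A (\<lambda>k. v k + (if k = m then - c / a else 0))"
    by (rule Q_shift[OF m, symmetric])
  finally show "Im (Qf n (\<lambda>i j. A i j - A i m * A m j / A m m) v) = 0 \<and>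
     0 \<le> Re (Qf n (\<lambda>i j. A i j - A i m * A m j / A m m) v)"
    using P unfolding psdf_def by metis
qed

lemma tr_split: assumes P: "psdf n A" and m: "m < n"
  shows "trf n R A = trf n R (\<lambda>i j. A i j - A i m * A m j / A m m) + Qf n R (\<lambda>k. A k m) / A m m"
proof -
  have "Qf n R (\<lambda>k. A k m) = (\<Sum>i<n. \<Sum>j<n. R i j * (A j m * A m i))"
    unfolding Qf_def by (intro sum.cong refl) (simp add: psdf_herm[OF P _ m] mult.assoc)
  then show ?thesis unfolding trf_def
    by (simp add: algebra_simps sum_subtractf sum.distrib sum_divide_distrib)
qed

lemma nn_add: "nn x \<Longrightarrow> nn y \<Longrightarrow> nn (x + y)" unfolding nn_def by simp

lemma main_ind:
  assumes R: "psdf n R"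
  shows "k \<le> n \<Longrightarrow> psdf n A \<Longrightarrow> (\<forall>i<n. \<forall>j<n. (i < n-k \<or> j < n-k) \<longrightarrow> A i j = 0) \<Longrightarrow> nn (trf n R A)"
proof (induction k arbitrary: A)
  case 0
  then have "trf n R A = 0" unfolding trf_def by (auto intro!: sum.neutral)
  then show ?case unfolding nn_def by simp
next
  case (Suc k)
  define m where "m = n - Suc k"
  have m: "m < n" and nk: "n - k = Suc m" using Suc.prems(1) unfolding m_def by auto
  have kn: "k \<le> n" using Suc.prems(1) by simp
  have Z: "\<And>i j. i < n \<Longrightarrow> j < n \<Longrightarrow> i < m \<or> j < m \<Longrightarrow> A i j = 0"
    using Suc.prems(3) unfolding m_def by blast
  show ?case
  proof (cases "A m m = 0")
    case True
    have r: "A m j = 0" if "j < n" for j using psdf_zero_row[OF Suc.prems(2) m True that] .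
    have c: "A j m = 0" if "j < n" for j using r[OF that] psdf_herm[OF Suc.prems(2) m that] by simp
    have "\<forall>i<n. \<forall>j<n. (i < n-k \<or> j < n-k) \<longrightarrow> A i j = 0"
      unfolding nk using Z r c by (metis less_Suc_eq)
    then show ?thesis using Suc.IH[OF kn Suc.prems(2)] by blast
  next
    case False
    define A' where "A' = (\<lambda>i j. A i j - A i m * A m j / A m m)"
    have P': "psdf n A'" unfolding A'_def by (rule schur_psd[OF Suc.prems(2) m False])
    have "\<forall>i<n. \<forall>j<n. (i < n-k \<or> j < n-k) \<longrightarrow> A' i j = 0"
      unfolding nk A'_def using Z m False by (auto simp: less_Suc_eq)
    then have h1: "nn (trf n R A')" using Suc.IH[OF kn P'] by blast
    have d: "Im (A m m) = 0" "0 \<le> Re (A m m)" using psdf_diag[OF Suc.prems(2) m] by auto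
    then have am: "A m m = of_real (Re (A m m))" "Re (A m m) > 0" using False
      by (auto simp: complex_eq_iff)
    have q: "Im (Qf n R (\<lambda>k. A k m)) = 0" "0 \<le> Re (Qf n R (\<lambda>k. A k m))" using R unfolding psdf_def by auto
    have h2: "nn (Qf n R (\<lambda>k. A k m) / A m m)"
      unfolding nn_def using q am(2) by (subst am(1), simp add: Re_divide_of_real Im_divide_of_real)+
    show ?thesis unfolding tr_split[OF Suc.prems(2) m, of R] A'_def[symmetric]
      by (rule nn_add[OF h1 h2])
  qed
qed

lemma trf_nn: "psdf n R \<Longrightarrow> psdf n A \<Longrightarrow> nn (trf n R A)"
  using main_ind[of n R n A] by simp


lemma sum_pair: "(\<Sum>p<n1*n2. g p) = (\<Sum>i<n1. \<Sum>k<n2. g (i*n2+k::nat))"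
proof -
  have "(\<Sum>p<n1*n2. g p) = (\<Sum>i<n1. sum g {i*n2..<i*n2+n2})"
    by (rule sum.nat_group[symmetric])
  also have "\<dots> = (\<Sum>i<n1. \<Sum>k<n2. g (i*n2+k))"
  proof (rule sum.cong[OF refl])
    fix i
    have "sum g {0+i*n2..<n2+i*n2} = (\<Sum>k=0..<n2. g (k+i*n2))"
      by (rule sum.shift_bounds_nat_ivl)
    then show "sum g {i*n2..<i*n2+n2} = (\<Sum>k<n2. g (i*n2+k))"
      by (simp add: atLeast0LessThan add.commute)
  qed
  finally show ?thesis .
qed

lemma mtrace_mult:
  assumes "A \<in> carrier_mat n n" "B \<in> carrier_mat n n"
  shows "mtrace (A*B) = trf n (\<lambda>i j. A$$(i,j)) (\<lambda>i j. B$$(i,j))"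
  using assms unfolding mtrace_def trf_def
  by (auto simp: scalar_prod_def atLeast0LessThan intro!: sum.cong)

lemma kron_carrier: "A \<in> carrier_mat n1 n1 \<Longrightarrow> B \<in> carrier_mat n2 n2 \<Longrightarrow>
  kron A B \<in> carrier_mat (n1*n2) (n1*n2)"
  unfolding kron_def by auto

lemma kron_index: "A \<in> carrier_mat n1 n1 \<Longrightarrow> B \<in> carrier_mat n2 n2 \<Longrightarrow> i < n1 \<Longrightarrow> k < n2 \<Longrightarrow>
  j < n1 \<Longrightarrow> l < n2 \<Longrightarrow>
  kron A B $$ (i*n2+k, j*n2+l) = A $$ (i,j) * B $$ (k,l)"
proof -
  assume a: "A \<in> carrier_mat n1 n1" "B \<in> carrier_mat n2 n2" "i < n1" "k < n2" "j < n1" "l < n2"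
  have lt: "x*n2+y < n1*n2" if "x < n1" "y < n2" for x y
  proof -
    have "x*n2+y < (x+1)*n2" using that by simp
    also have "\<dots> \<le> n1*n2" using that by (intro mult_le_mono1) simp
    finally show ?thesis .
  qed
  have "i*n2+k < n1*n2" "j*n2+l < n1*n2" using a lt by auto
  then show ?thesis using a unfolding kron_def by auto
qed

lemma trace_kron:
  assumes A: "A \<in> carrier_mat n1 n1" and C: "C \<in> carrier_mat n1 n1"
    and B: "B \<in> carrier_mat n2 n2" and D: "D \<in> carrier_mat n2 n2"
  shows "mtrace (kron A B * kron C D) = mtrace (A*C) * mtrace (B*D)"
proof -
  have "mtrace (kron A B * kron C D) = 
    (\<Sum>i<n1. \<Sum>k<n2. \<Sum>j<n1. \<Sum>l<n2. (A$$(i,j) * B$$(k,l)) * (C$$(j,i) * D$$(l,k)))"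
    unfolding mtrace_mult[OF kron_carrier[OF A B] kron_carrier[OF C D]] trf_def sum_pair
    using A B C D by (auto simp: kron_index intro!: sum.cong)
  also have "\<dots> = (\<Sum>i<n1. \<Sum>k<n2. \<Sum>j<n1. \<Sum>l<n2. (A$$(i,j) * C$$(j,i)) * (B$$(k,l) * D$$(l,k)))"
    by (simp only: mult_ac)
  also have "\<dots> = mtrace (A*C) * mtrace (B*D)"
    unfolding mtrace_mult[OF A C] mtrace_mult[OF B D] trf_def sum_product by simp
  finally show ?thesis .
qed

definition ent :: "complex mat \<Rightarrow> nat \<Rightarrow> nat \<Rightarrow> complex" where
  "ent A = (\<lambda>i j. A $$ (i,j))"

lemma psd_psdf: assumes "psd n A" shows "psdf n (ent A)"
  unfolding psdf_def
proof
  fix v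
  have A: "A \<in> carrier_mat n n" using assms unfolding psd_def by auto
  have "(A *\<^sub>v vec n v) \<bullet>c vec n v = Qf n (ent A) v"
    using A unfolding Qf_def ent_def
    by (auto simp: scalar_prod_def atLeast0LessThan sum_distrib_right intro!: sum.cong)
  moreover have "vec n v \<in> carrier_vec n" by simp
  ultimately show "Im (Qf n (ent A) v) = 0 \<and> 0 \<le> Re (Qf n (ent A) v)"
    using assms unfolding psd_def by metis
qed

lemma dm_carrier: "density_matrix n A \<Longrightarrow> A \<in> carrier_mat n n"
  unfolding density_matrix_def psd_def by auto

lemma dm_psdf: "density_matrix n A \<Longrightarrow> psdf n (ent A)"
  unfolding density_matrix_def by (auto intro: psd_psdf)

lemma tr_real: assumes "density_matrix n A" "density_matrix n B"
  shows "mtrace (A * B) = of_real (Re (mtrace (A * B)))" "0 \<le> Re (mtrace (A * B))"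
proof -
  have "nn (mtrace (A * B))"
    unfolding mtrace_mult[OF dm_carrier[OF assms(1)] dm_carrier[OF assms(2)]]
    using trf_nn[OF dm_psdf[OF assms(1)] dm_psdf[OF assms(2)]] unfolding ent_def .
  then show "mtrace (A * B) = of_real (Re (mtrace (A * B)))" "0 \<le> Re (mtrace (A * B))"
    unfolding nn_def by (auto simp: complex_eq_iff)
qed

lemma tr_pos: assumes D: "density_matrix n A" shows "0 < Re (mtrace (A * A))"
proof -
  have C: "A \<in> carrier_mat n n" using dm_carrier[OF D] .
  have P: "psdf n (ent A)" using dm_psdf[OF D] .
  have "(\<Sum>i<n. A $$ (i,i)) = 1" using D C unfolding density_matrix_def mtrace_def by auto
  then have "\<exists>k<n. A $$ (k,k) \<noteq> 0"
    by (metis (mono_tags, lifting) lessThan_iff sum.neutral zero_neq_one)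
  then obtain k where k: "k < n" "A $$ (k,k) \<noteq> 0" by blast
  have "Re (mtrace (A * A)) = (\<Sum>i<n. \<Sum>j<n. cmod (A $$ (i,j)) ^ 2)" (is "_ = ?S")
    unfolding mtrace_mult[OF C C] trf_def Re_sum
  proof (intro sum.cong refl)
    fix i j assume "i \<in> {..<n}" "j \<in> {..<n}"
    then have "A $$ (j,i) = cnj (A $$ (i,j))" using psdf_herm[OF P, of i j] unfolding ent_def by simp
    then show "Re (A $$ (i, j) * A $$ (j, i)) = (cmod (A $$ (i, j)))\<^sup>2"
      by (simp add: complex_mult_cnj cmod_def)
  qed
  moreover have "cmod (A $$ (k,k)) ^ 2 \<le> (\<Sum>j<n. cmod (A $$ (k,j)) ^ 2)"
    by (rule member_le_sum) (use k in auto)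
  moreover have "(\<Sum>j<n. cmod (A $$ (k,j)) ^ 2) \<le> (\<Sum>i<n. \<Sum>j<n. cmod (A $$ (i,j)) ^ 2)"
    by (rule member_le_sum) (use k in \<open>auto intro: sum_nonneg\<close>)
  moreover have "0 < cmod (A $$ (k,k)) ^ 2" using k by simp
  ultimately show ?thesis by linarith
qed

lemma tpow_carrier: "A \<in> carrier_mat d d \<Longrightarrow> tpow A n \<in> carrier_mat (d^n) (d^n)"
  by (induction n) (auto intro: kron_carrier)

lemma tpow_trace: assumes "A \<in> carrier_mat d d" "B \<in> carrier_mat d d"
  shows "mtrace (tpow A n * tpow B n) = mtrace (A * B) ^ n"
proof (induction n)
  case 0
  then show ?case by (simp add: mtrace_def)
next
  case (Suc n)
  then show ?case using trace_kron[OF assms(1) assms(2) tpow_carrier[OF assms(1)] tpow_carrier[OF assms(2)]]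
    by simp
qed

lemma ineq1: fixes a1 a2 p1 p2 s1 s2 :: real
  assumes "0 \<le> a1" "0 \<le> a2" "0 < p1" "0 < p2" "0 < s1" "0 < s2"
  shows "a1 / max p1 s1 * (a2 / max p2 s2) \<le> (a1 * a2) / max (p1 * p2) (s1 * s2)"
proof -
  have "max (p1 * p2) (s1 * s2) \<le> max p1 s1 * max p2 s2"
  proof -
    have "p1 * p2 \<le> max p1 s1 * max p2 s2" using assms by (intro mult_mono) auto
    moreover have "s1 * s2 \<le> max p1 s1 * max p2 s2" using assms by (intro mult_mono) auto
    ultimately show ?thesis by simp
  qed
  moreover have "0 < max (p1 * p2) (s1 * s2)" using assms by (simp add: less_max_iff_disj)
  ultimately have "(a1 * a2) / (max p1 s1 * max p2 s2) \<le> (a1 * a2) / max (p1 * p2) (s1 * s2)"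
    using assms by (intro divide_left_mono) auto
  then show ?thesis by simp
qed

lemma eq2: fixes a p s t :: real assumes "0 < t"
  shows "(a * t) / max (p * t) (s * t) = a / max p s"
proof -
  have "max (p * t) (s * t) = max p s * t" using assms by (simp add: max_def)
  then show ?thesis using assms by simp
qed

lemma eq3: fixes a p s :: real assumes "0 \<le> p" "0 \<le> s"
  shows "a ^ n / max (p ^ n) (s ^ n) = (a / max p s) ^ n"
proof -
  have "max (p ^ n) (s ^ n) = max p s ^ n"
  proof (cases "p \<le> s")
    case True
    then have "p ^ n \<le> s ^ n" using assms by (intro power_mono) auto
    then show ?thesis using True by (simp add: max_def)
  next
    case False
    then have "s ^ n \<le> p ^ n" using assms by (intro power_mono) auto
    then show ?thesis using False by (simp add: max_def)
  qed
  then show ?thesis by (simp add: power_divide)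
qed

lemma Re_mult_real: "x = of_real (Re x) \<Longrightarrow> y = of_real (Re y) \<Longrightarrow> Re (x*y) = Re x * Re y"
  by (metis Re_complex_of_real of_real_mult)

lemma Re_pow_real: "x = of_real (Re x) \<Longrightarrow> Re (x ^ n) = Re x ^ n"
  by (metis Re_complex_of_real of_real_power)

theorem theorem4:
  shows "(\<forall>n1 n2 \<rho>1 \<sigma>1 \<rho>2 \<sigma>2.
            density_matrix n1 \<rho>1 \<longrightarrow> density_matrix n1 \<sigma>1 \<longrightarrow>
            density_matrix n2 \<rho>2 \<longrightarrow> density_matrix n2 \<sigma>2 \<longrightarrow>
            F2 (kron \<rho>1 \<rho>2) (kron \<sigma>1 \<sigma>2) \<ge> F2 \<rho>1 \<sigma>1 * F2 \<rho>2 \<sigma>2)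
       \<and> (\<forall>n1 n2 \<rho> \<sigma> \<tau>.
            density_matrix n1 \<rho> \<longrightarrow> density_matrix n1 \<sigma> \<longrightarrow> density_matrix n2 \<tau> \<longrightarrow>
            F2 (kron \<rho> \<tau>) (kron \<sigma> \<tau>) = F2 \<rho> \<sigma>)
       \<and> (\<forall>d \<rho> \<sigma> (n::nat).
            density_matrix d \<rho> \<longrightarrow> density_matrix d \<sigma> \<longrightarrow> n \<ge> 1 \<longrightarrow>
            F2 (tpow \<rho> n) (tpow \<sigma> n) = F2 \<rho> \<sigma> ^ n)"
proof (intro conjI allI impI)
  fix n1 n2 \<rho>1 \<sigma>1 \<rho>2 \<sigma>2
  assume D: "density_matrix n1 \<rho>1" "density_matrix n1 \<sigma>1" "density_matrix n2 \<rho>2" "density_matrix n2 \<sigma>2"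
  note C = dm_carrier[OF D(1)] dm_carrier[OF D(2)] dm_carrier[OF D(3)] dm_carrier[OF D(4)]
  have e1: "Re (mtrace (kron \<rho>1 \<rho>2 * kron \<sigma>1 \<sigma>2)) = Re (mtrace (\<rho>1 * \<sigma>1)) * Re (mtrace (\<rho>2 * \<sigma>2))"
    unfolding trace_kron[OF C(1) C(2) C(3) C(4)] by (rule Re_mult_real[OF tr_real(1)[OF D(1,2)] tr_real(1)[OF D(3,4)]])
  have e2: "Re (mtrace (kron \<rho>1 \<rho>2 * kron \<rho>1 \<rho>2)) = Re (mtrace (\<rho>1 * \<rho>1)) * Re (mtrace (\<rho>2 * \<rho>2))"
    unfolding trace_kron[OF C(1) C(1) C(3) C(3)] by (rule Re_mult_real[OF tr_real(1)[OF D(1,1)] tr_real(1)[OF D(3,3)]])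
  have e3: "Re (mtrace (kron \<sigma>1 \<sigma>2 * kron \<sigma>1 \<sigma>2)) = Re (mtrace (\<sigma>1 * \<sigma>1)) * Re (mtrace (\<sigma>2 * \<sigma>2))"
    unfolding trace_kron[OF C(2) C(2) C(4) C(4)] by (rule Re_mult_real[OF tr_real(1)[OF D(2,2)] tr_real(1)[OF D(4,4)]])
  show "F2 \<rho>1 \<sigma>1 * F2 \<rho>2 \<sigma>2 \<le> F2 (kron \<rho>1 \<rho>2) (kron \<sigma>1 \<sigma>2)"
    unfolding F2_def e1 e2 e3
    by (rule ineq1[OF tr_real(2)[OF D(1,2)] tr_real(2)[OF D(3,4)] tr_pos[OF D(1)] tr_pos[OF D(3)]
          tr_pos[OF D(2)] tr_pos[OF D(4)]])
next
  fix n1 n2 \<rho> \<sigma> \<tau>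
  assume D: "density_matrix n1 \<rho>" "density_matrix n1 \<sigma>" "density_matrix n2 \<tau>"
  note C = dm_carrier[OF D(1)] dm_carrier[OF D(2)] dm_carrier[OF D(3)]
  have e1: "Re (mtrace (kron \<rho> \<tau> * kron \<sigma> \<tau>)) = Re (mtrace (\<rho> * \<sigma>)) * Re (mtrace (\<tau> * \<tau>))"
    unfolding trace_kron[OF C(1) C(2) C(3) C(3)] by (rule Re_mult_real[OF tr_real(1)[OF D(1,2)] tr_real(1)[OF D(3,3)]])
  have e2: "Re (mtrace (kron \<rho> \<tau> * kron \<rho> \<tau>)) = Re (mtrace (\<rho> * \<rho>)) * Re (mtrace (\<tau> * \<tau>))"
    unfolding trace_kron[OF C(1) C(1) C(3) C(3)] by (rule Re_mult_real[OF tr_real(1)[OF D(1,1)] tr_real(1)[OF D(3,3)]])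
  have e3: "Re (mtrace (kron \<sigma> \<tau> * kron \<sigma> \<tau>)) = Re (mtrace (\<sigma> * \<sigma>)) * Re (mtrace (\<tau> * \<tau>))"
    unfolding trace_kron[OF C(2) C(2) C(3) C(3)] by (rule Re_mult_real[OF tr_real(1)[OF D(2,2)] tr_real(1)[OF D(3,3)]])
  show "F2 (kron \<rho> \<tau>) (kron \<sigma> \<tau>) = F2 \<rho> \<sigma>"
    unfolding F2_def e1 e2 e3 by (rule eq2[OF tr_pos[OF D(3)]])
next
  fix d \<rho> \<sigma> and n :: nat
  assume D: "density_matrix d \<rho>" "density_matrix d \<sigma>" and "n \<ge> 1"
  note C = dm_carrier[OF D(1)] dm_carrier[OF D(2)]
  show "F2 (tpow \<rho> n) (tpow \<sigma> n) = F2 \<rho> \<sigma> ^ n"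
    unfolding F2_def tpow_trace[OF C(1) C(2)] tpow_trace[OF C(1) C(1)] tpow_trace[OF C(2) C(2)]
      Re_pow_real[OF tr_real(1)[OF D(1,2)]] Re_pow_real[OF tr_real(1)[OF D(1,1)]]
      Re_pow_real[OF tr_real(1)[OF D(2,2)]]
    by (rule eq3[OF tr_real(2)[OF D(1,1)] tr_real(2)[OF D(2,2)]])
qed

end
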